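(* Let $\kappa$ be a finite field of characteristic $p \neq 2$, let $\chi$ be the quadratic character of $\kappa^\times$, and let $\mu$ be the Möbius function on non-zero elements of $\kappa[u]$. Let $a, b \in \kappa^\times$ and let $g_1, g_2 \in \kappa[u]$ be relatively prime (not both zero), using the convention $\deg 0 = -\infty$. Then $$\mu(a g_1^{2p} + b u g_2^{2p}) = \begin{cases} -\chi(-1)^{\deg g_2} & \text{if } \deg g_1 \le \deg g_2,\\ \chi(-1)^{\deg g_1} & \text{if } \deg g_1 > \deg g_2.\end{cases}$$
   Context: For non-zero $P \in \kappa[u]$, $\mu(P) = 0$ if $P$ is divisible by the square of a non-constant polynomial, and otherwise $\mu(P) = (-1)^r$ where $r$ is the number of (monic) irreducible factors of $P$; $\mu$ of a non-zero constant is $1$. *)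

theory Defs
  imports "HOL-Computational_Algebra.Computational_Algebra"
begin

definition quad_char :: "'a::field \<Rightarrow> int" where
  "quad_char x = (if x = 0 then 0 else if (\<exists>y. y ^ 2 = x) then 1 else -1)"

definition poly_mobius :: "'a::field_gcd poly \<Rightarrow> int" where
  "poly_mobius P = (if squarefree P then (-1) ^ card (prime_factors P) else 0)"

end

theory Submission
  imports Defs "Subresultants.More_Homomorphisms" "HOL-Algebra.Algebraic_Closure_Type"
    "HOL-Number_Theory.Cong" "HOL-Library.Cardinality"
begin
hide_const (open) up_ring.coeff up_ring.monom Polynomials.degree Polynomials.lead_coeff


section \<open>The cardinality of a finite field is a power of its characteristic\<close>

fun sp :: "'a::field list \<Rightarrow> 'a set" where
  "sp [] = {0}"
| "sp (x # xs) = (\<lambda>(k, y). of_nat k * x + y) ` ({..<CHAR('a)} \<times> sp xs)"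

lemma of_nat_mod_CHAR: "(of_nat (k mod CHAR('a)) :: 'a::field) = of_nat k"
  by (simp add: of_nat_eq_iff_cong_CHAR cong_def)

lemma sp_0: "(0::'a::finite_field) \<in> sp xs"
proof (induction xs)
  case (Cons x xs)
  have "CHAR('a) > 0" by simp
  then show ?case using Cons by (auto intro!: image_eqI[of _ _ "(0, 0)"])
qed simp

lemma sp_add: "y \<in> sp xs \<Longrightarrow> z \<in> sp xs \<Longrightarrow> y + z \<in> sp (xs :: 'a::finite_field list)"
proof (induction xs arbitrary: y z)
  case Nil then show ?case by simp
next
  case (Cons x xs)
  from Cons.prems obtain k y1 where y: "k < CHAR('a)" "y1 \<in> sp xs" "y = of_nat k * x + y1" by auto
  from Cons.prems obtain k' z1 where z: "k' < CHAR('a)" "z1 \<in> sp xs" "z = of_nat k' * x + z1" by auto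
  have "y + z = of_nat ((k + k') mod CHAR('a)) * x + (y1 + z1)"
    by (simp add: y z of_nat_mod_CHAR algebra_simps)
  moreover have "(k + k') mod CHAR('a) < CHAR('a)" by simp
  moreover have "y1 + z1 \<in> sp xs" using Cons.IH y z by blast
  ultimately show ?case by (auto intro!: image_eqI[of _ _ "((k + k') mod CHAR('a), y1 + z1)"])
qed

lemma sp_smult: "y \<in> sp xs \<Longrightarrow> of_nat j * y \<in> sp (xs :: 'a::finite_field list)"
proof (induction xs arbitrary: y)
  case Nil then show ?case by simp
next
  case (Cons x xs)
  from Cons.prems obtain k y1 where y: "k < CHAR('a)" "y1 \<in> sp xs" "y = of_nat k * x + y1" by auto
  have "of_nat j * y = of_nat ((j * k) mod CHAR('a)) * x + of_nat j * y1"
    by (simp add: y of_nat_mod_CHAR algebra_simps)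
  moreover have "(j * k) mod CHAR('a) < CHAR('a)" by simp
  moreover have "of_nat j * y1 \<in> sp xs" using Cons.IH y by blast
  ultimately show ?case by (auto intro!: image_eqI[of _ _ "((j * k) mod CHAR('a), of_nat j * y1)"])
qed

lemma sp_neg: "y \<in> sp xs \<Longrightarrow> - y \<in> sp (xs :: 'a::finite_field list)"
proof -
  assume y: "y \<in> sp xs"
  obtain n where n: "CHAR('a) = Suc n" using CHAR_pos[where ?'a = 'a] gr0_conv_Suc by blast
  have "of_nat (CHAR('a) - 1) * y + y = of_nat CHAR('a) * y"
    unfolding n by (simp add: algebra_simps)
  also have "\<dots> = 0" by simp
  finally have "- y = of_nat (CHAR('a) - 1) * y" by (simp add: neg_eq_iff_add_eq_0 add.commute)
  then show ?thesis using sp_smult[OF y] by simp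
qed

lemma sp_diff: "y \<in> sp xs \<Longrightarrow> z \<in> sp xs \<Longrightarrow> y - z \<in> sp (xs :: 'a::finite_field list)"
  using sp_add[of y xs "-z"] sp_neg[of z xs] by simp

lemma sp_mem: "x \<in> set xs \<Longrightarrow> x \<in> sp (xs :: 'a::finite_field list)"
proof (induction xs)
  case (Cons a xs)
  show ?case
  proof (cases "x = a")
    case True
    have "CHAR('a) > 1" using prime_gt_1_nat[OF CHAR_prime[where ?'a='a]] .
    then show ?thesis using True sp_0[of xs] by (auto intro!: image_eqI[of _ _ "(1, 0)"])
  next
    case False
    then have "x \<in> sp xs" using Cons by simp
    then show ?thesis by (auto intro!: image_eqI[of _ _ "(0, x)"])
  qed
qed simp

lemma sp_card: "\<exists>m. card (sp (xs :: 'a::finite_field list)) = CHAR('a) ^ m"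
proof (induction xs)
  case Nil then show ?case by (intro exI[of _ 0]) simp
next
  case (Cons x xs)
  then obtain m where m: "card (sp xs) = CHAR('a) ^ m" by blast
  show ?case
  proof (cases "x \<in> sp xs")
    case True
    have "sp (x # xs) = sp xs"
    proof
      show "sp (x # xs) \<subseteq> sp xs" using True by (auto intro!: sp_add sp_smult)
      show "sp xs \<subseteq> sp (x # xs)" by (auto intro!: image_eqI[of _ _ "(0, _)"])
    qed
    then show ?thesis using m by auto
  next
    case False
    have inj: "inj_on (\<lambda>(k, y). of_nat k * x + y) ({..<CHAR('a)} \<times> sp xs)"
    proof (rule inj_onI, clarify)
      fix k y k' y'
      assume k: "k < CHAR('a)" "k' < CHAR('a)" and yy: "y \<in> sp xs" "y' \<in> sp xs"
        and eq: "of_nat k * x + y = of_nat k' * x + (y' :: 'a)"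
      have "k = k'"
      proof (rule ccontr)
        assume "k \<noteq> k'"
        have "\<exists>j t. 0 < j \<and> j < CHAR('a) \<and> [j * t = Suc 0] (mod CHAR('a)) \<and> of_nat j * x \<in> sp xs"
        proof (cases "k' < k")
          case True
          have "of_nat (k - k') * x = y' - y" using eq True by (simp add: of_nat_diff algebra_simps)
          then have "of_nat (k - k') * x \<in> sp xs" using sp_diff[OF yy(2) yy(1)] by simp
          moreover have "\<not> CHAR('a) dvd (k - k')" using True k by (auto dest: dvd_imp_le)
          then have "coprime CHAR('a) (k - k')" by (intro prime_imp_coprime) auto
          then obtain t where "[(k - k') * t = Suc 0] (mod CHAR('a))"
            using cong_solve_coprime_nat[of "k - k'" "CHAR('a)"] coprime_commute by blast
          moreover have "0 < k - k'" "k - k' < CHAR('a)" using True k by auto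
          ultimately show ?thesis by blast
        next
          case False
          with \<open>k \<noteq> k'\<close> have lt: "k < k'" by simp
          have "of_nat (k' - k) * x = y - y'" using eq lt by (simp add: of_nat_diff algebra_simps)
          then have "of_nat (k' - k) * x \<in> sp xs" using sp_diff[OF yy(1) yy(2)] by simp
          moreover have "\<not> CHAR('a) dvd (k' - k)" using lt k by (auto dest: dvd_imp_le)
          then have "coprime CHAR('a) (k' - k)" by (intro prime_imp_coprime) auto
          then obtain t where "[(k' - k) * t = Suc 0] (mod CHAR('a))"
            using cong_solve_coprime_nat[of "k' - k" "CHAR('a)"] coprime_commute by blast
          moreover have "0 < k' - k" "k' - k < CHAR('a)" using lt k by auto
          ultimately show ?thesis by blast
        qed
        then obtain j t where jt: "[j * t = Suc 0] (mod CHAR('a))" "of_nat j * x \<in> sp xs" by blast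
        have "(of_nat t * of_nat j :: 'a) = of_nat (j * t)" by (simp add: mult.commute)
        also have "\<dots> = 1" using jt(1) by (simp add: of_nat_eq_iff_cong_CHAR[symmetric])
        finally have tj: "(of_nat t * of_nat j :: 'a) = 1" .
        have xe: "x = of_nat t * (of_nat j * x)" by (simp add: mult.assoc[symmetric] tj)
        have "of_nat t * (of_nat j * x) \<in> sp xs" by (rule sp_smult[OF jt(2)])
        then have "x \<in> sp xs" by (subst xe)
        with False show False by contradiction
      qed
      then show "k = k' \<and> y = y'" using eq by simp
    qed
    have "card (sp (x # xs)) = CHAR('a) * card (sp xs)"
      by (simp add: card_image[OF inj] card_cartesian_product)
    then show ?thesis using m by (intro exI[of _ "Suc m"]) simp
  qed
qed

lemma card_finite_field_CHAR_power: "\<exists>m. card (UNIV :: 'a::finite_field set) = CHAR('a) ^ m"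
proof -
  have "\<exists>xs::'a list. set xs = UNIV" by (rule finite_list) simp
  then obtain xs :: "'a list" where xs: "set xs = UNIV" by blast
  have "sp xs = UNIV" using sp_mem[of _ xs] xs by auto
  then show ?thesis using sp_card[of xs] by metis
qed

section \<open>Frobenius on the algebraic closure\<close>

interpretation ac: field_hom "to_ac :: 'a::field \<Rightarrow> 'a alg_closure"
  by unfold_locales auto

lemma frob_add: "(x + y :: ('a::finite_field) alg_closure) ^ CARD('a) = x ^ CARD('a) + y ^ CARD('a)"
proof -
  obtain m where m: "CARD('a) = CHAR('a) ^ m" using card_finite_field_CHAR_power by blast
  show ?thesis
    by (rule freshmans_dream'[where n = m]) (simp_all add: m)
qed

interpretation frob: idom_hom "\<lambda>x::('a::finite_field) alg_closure. x ^ CARD('a)"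
  by unfold_locales (simp_all add: frob_add power_mult_distrib)

lemma frob_inj:
  fixes x y :: "('a::finite_field) alg_closure"
  assumes "x ^ CARD('a) = y ^ CARD('a)" shows "x = y"
proof -
  have "(x - y) ^ CARD('a) = 0" using assms frob.hom_minus[of x y] by simp
  then show ?thesis by simp
qed

lemma frob_iter_inj:
  fixes x y :: "('a::finite_field) alg_closure"
  assumes "x ^ (CARD('a) ^ i) = y ^ (CARD('a) ^ i)" shows "x = y"
  using assms
proof (induction i arbitrary: x y)
  case (Suc i)
  have "(x ^ CARD('a)) ^ (CARD('a) ^ i) = (y ^ CARD('a)) ^ (CARD('a) ^ i)"
    using Suc.prems by (simp add: power_mult[symmetric] mult.commute)
  then have "x ^ CARD('a) = y ^ CARD('a)" by (rule Suc.IH)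
  then show ?case by (rule frob_inj)
qed simp

lemma to_ac_frob: "to_ac (x :: 'a::finite_field) ^ CARD('a) = to_ac x"
  by (simp flip: to_ac_power add: finite_field_power_card_eq_same)

lemma map_frob_ac:
  "map_poly (\<lambda>x. x ^ CARD('a)) (map_poly to_ac (p :: 'a::finite_field poly)) = map_poly to_ac p"
  by (rule poly_eqI) (simp add: coeff_map_poly to_ac_frob)

lemma poly_frob:
  "poly (map_poly to_ac (p :: 'a::finite_field poly)) (x ^ CARD('a)) = poly (map_poly to_ac p) x ^ CARD('a)"
  using frob.poly_map_poly[of "map_poly to_ac p" x] by (simp add: map_frob_ac)

lemma card_ge2: "CARD('a::finite_field) \<ge> 2"
proof -
  have "{0, 1::'a} \<subseteq> UNIV" by simp
  then have "card {0, 1::'a} \<le> CARD('a)" by (intro card_mono) auto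
  then show ?thesis by simp
qed

lemma fixed_in_range:
  fixes y :: "('a::finite_field) alg_closure"
  assumes "y ^ CARD('a) = y" shows "y \<in> range to_ac"
proof -
  define P :: "'a alg_closure poly" where "P = monom 1 CARD('a) - monom 1 1"
  have q2: "CARD('a) \<ge> 2" by (rule card_ge2)
  have polyP: "poly P z = z ^ CARD('a) - z" for z by (simp add: P_def poly_monom)
  have "coeff P CARD('a) = 1" using q2 by (simp add: P_def coeff_monom)
  then have P0: "P \<noteq> 0" by auto
  have degP: "degree P \<le> CARD('a)"
  proof -
    have "degree P \<le> max (degree (monom (1::'a alg_closure) CARD('a))) (degree (monom (1::'a alg_closure) 1))"
      unfolding P_def by (rule degree_diff_le_max)
    moreover have "degree (monom (1::'a alg_closure) CARD('a)) \<le> CARD('a)" by (rule degree_monom_le)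
    moreover have "degree (monom (1::'a alg_closure) 1) \<le> 1" by (rule degree_monom_le)
    ultimately show ?thesis using q2 by (simp add: max_def split: if_splits)
  qed
  define R where "R = {z. poly P z = 0}"
  have finR: "finite R" unfolding R_def using P0 by (rule poly_roots_finite)
  have cardR: "card R \<le> CARD('a)" unfolding R_def using card_poly_roots_bound[OF P0] degP by linarith
  have sub: "range to_ac \<subseteq> R" by (auto simp: R_def polyP to_ac_frob)
  have "card (range (to_ac :: 'a \<Rightarrow> _)) = CARD('a)" by (simp add: card_image inj_to_ac)
  then have "range to_ac = R" using card_subset_eq[OF finR sub] cardR card_mono[OF finR sub] by simp
  moreover have "y \<in> R" using assms by (simp add: R_def polyP)
  ultimately show ?thesis by simp
qed

lemma card_odd:
  assumes "CHAR('a::finite_field) \<noteq> 2" shows "odd CARD('a)"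
proof -
  obtain m where m: "CARD('a) = CHAR('a) ^ m" using card_finite_field_CHAR_power by blast
  have "CHAR('a) > 2" using assms prime_ge_2_nat[OF CHAR_prime[where ?'a='a]] by linarith
  then have "odd CHAR('a)" using prime_odd_nat[OF CHAR_prime[where ?'a='a]] by blast
  then show ?thesis using m by simp
qed

lemma power_card_minus1: "(x::'a::finite_field) \<noteq> 0 \<Longrightarrow> x ^ (CARD('a) - 1) = 1"
proof -
  assume "x \<noteq> 0"
  have "x ^ (CARD('a) - 1) * x = x ^ CARD('a)"
    using card_ge2[where ?'a='a] by (simp add: power_Suc2[symmetric])
  also have "\<dots> = x" by (rule finite_field_power_card_eq_same)
  finally show ?thesis using \<open>x \<noteq> 0\<close> by simp
qed

lemma euler_crit:
  fixes x :: "'a::finite_field"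
  assumes "CHAR('a) \<noteq> 2" "x \<noteq> 0"
  shows "x ^ ((CARD('a) - 1) div 2) = of_int (quad_char x)"
proof -
  have odd: "odd CARD('a)" using card_odd assms(1) by blast
  have h2: "2 * ((CARD('a) - 1) div 2) = CARD('a) - 1" using odd card_ge2[where ?'a='a] by presburger
  show ?thesis
  proof (cases "\<exists>y. y ^ 2 = x")
    case True
    then obtain y where y: "y ^ 2 = x" by blast
    then have "y \<noteq> 0" using assms by auto
    have "x ^ ((CARD('a) - 1) div 2) = y ^ (2 * ((CARD('a) - 1) div 2))"
      by (simp add: y[symmetric] power_mult)
    also have "\<dots> = y ^ (CARD('a) - 1)" by (simp only: h2)
    also have "\<dots> = 1" using power_card_minus1[OF \<open>y \<noteq> 0\<close>] .
    finally show ?thesis using True assms by (simp add: quad_char_def)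
  next
    case False
    obtain z :: "'a alg_closure" where z: "z ^ 2 = to_ac x" using nth_root_exists[of 2 "to_ac x"] by auto
    have "z \<notin> range to_ac"
    proof
      assume "z \<in> range to_ac"
      then obtain w where "z = to_ac w" by auto
      then have "to_ac (w ^ 2) = to_ac x" using z by simp
      then have "w ^ 2 = x" by (simp only: to_ac_eq_iff)
      then show False using False by blast
    qed
    then have "z ^ CARD('a) \<noteq> z" using fixed_in_range by blast
    moreover have "z ^ CARD('a) = z ^ (CARD('a) - 1) * z"
      using card_ge2[where ?'a='a] by (simp add: power_Suc2[symmetric])
    ultimately have "z ^ (CARD('a) - 1) \<noteq> 1" by auto
    moreover have "to_ac (x ^ ((CARD('a) - 1) div 2)) = z ^ (2 * ((CARD('a) - 1) div 2))"
      by (simp add: z[symmetric] power_mult)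
    then have "z ^ (CARD('a) - 1) = to_ac (x ^ ((CARD('a) - 1) div 2))" by (simp only: h2)
    ultimately have ne1: "x ^ ((CARD('a) - 1) div 2) \<noteq> 1" by (metis to_ac_1)
    have "(x ^ ((CARD('a) - 1) div 2)) ^ 2 = x ^ (2 * ((CARD('a) - 1) div 2))"
      by (simp add: power_mult[symmetric] mult.commute)
    also have "\<dots> = x ^ (CARD('a) - 1)" by (simp only: h2)
    also have "\<dots> = 1" using power_card_minus1[OF assms(2)] .
    finally have "(x ^ ((CARD('a) - 1) div 2)) ^ 2 = 1" .
    then have "x ^ ((CARD('a) - 1) div 2) = -1" using ne1
      by (metis power2_eq_1_iff)
    then show ?thesis using False assms by (simp add: quad_char_def)
  qed
qed

hide_const (open) Divisibility.prime Divisibility.irreducible Module.module.smult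

section \<open>Separable polynomials and splitting\<close>

definition sep :: "'b::field poly \<Rightarrow> bool" where
  "sep F \<longleftrightarrow> (\<forall>x. poly F x = 0 \<longrightarrow> poly (pderiv F) x \<noteq> 0)"

definition rts :: "'b::field poly \<Rightarrow> 'b set" where
  "rts F = {x. poly F x = 0}"

lemma sep_nonzero: "sep F \<Longrightarrow> F \<noteq> 0"
  by (auto simp: sep_def)

lemma sep_dvd:
  assumes "sep F" "H dvd F" shows "sep H"
  unfolding sep_def
proof (intro allI impI)
  fix x assume Hx: "poly H x = 0"
  from assms(2) obtain W where F: "F = H * W" by (elim dvdE)
  have "poly F x = 0" using Hx F by simp
  then have "poly (pderiv F) x \<noteq> 0" using assms(1) by (simp add: sep_def)
  then show "poly (pderiv H) x \<noteq> 0" using Hx by (simp add: F pderiv_mult)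
qed

lemma sep_square:
  assumes "sep F" "H * H dvd F" "poly H x = 0" shows False
proof -
  from assms(2) obtain W where F: "F = H * H * W" by (elim dvdE)
  have "poly F x = 0" using assms(3) F by simp
  then have "poly (pderiv F) x \<noteq> 0" using assms(1) by (simp add: sep_def)
  then show False using assms(3) by (simp add: F pderiv_mult)
qed

lemma finite_rts: "F \<noteq> 0 \<Longrightarrow> finite (rts F)"
  unfolding rts_def by (rule poly_roots_finite)

lemma split_sep:
  fixes F :: "'b::alg_closed_field poly"
  assumes "sep F"
  shows "F = smult (lead_coeff F) (\<Prod>x\<in>rts F. [:-x, 1:]) \<and> card (rts F) = degree F"
  using assms
proof (induction "degree F" arbitrary: F rule: less_induct)
  case (less F)
  have F0: "F \<noteq> 0" using less.prems by (rule sep_nonzero)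
  show ?case
  proof (cases "degree F = 0")
    case True
    then obtain c where c: "F = [:c:]" by (elim degree_eq_zeroE)
    with F0 have "c \<noteq> 0" by simp
    then have "rts F = {}" by (simp add: rts_def c)
    then show ?thesis using True by (simp add: c)
  next
    case False
    then obtain x where x: "poly F x = 0" using alg_closed_imp_poly_has_root by blast
    then have "[:-x, 1:] dvd F" using poly_eq_0_iff_dvd by blast
    then obtain W where FW: "F = [:-x, 1:] * W" by (elim dvdE)
    have W0: "W \<noteq> 0" using F0 FW by auto
    have degF: "degree F = Suc (degree W)" unfolding FW using W0 by (subst degree_mult_eq) auto
    have "W dvd F" unfolding FW by (rule dvd_triv_right)
    then have sepW: "sep W" using less.prems sep_dvd by blast
    have "poly (pderiv F) x \<noteq> 0" using less.prems x by (simp add: sep_def)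
    moreover have "poly (pderiv F) x = poly W x" unfolding FW pderiv_mult by (simp add: pderiv_pCons)
    ultimately have Wx: "poly W x \<noteq> 0" by simp
    have rtsF: "rts F = insert x (rts W)" by (auto simp: rts_def FW)
    have xW: "x \<notin> rts W" using Wx by (simp add: rts_def)
    have IH: "W = smult (lead_coeff W) (\<Prod>x\<in>rts W. [:-x, 1:]) \<and> card (rts W) = degree W"
      using less.hyps[of W] degF sepW by simp
    have finW: "finite (rts W)" using W0 by (rule finite_rts)
    have lc: "lead_coeff F = lead_coeff W" by (simp only: FW lead_coeff_mult) simp
    have "F = [:-x, 1:] * smult (lead_coeff W) (\<Prod>x\<in>rts W. [:-x, 1:])" using IH FW by simp
    also have "\<dots> = smult (lead_coeff F) (\<Prod>x\<in>rts F. [:-x, 1:])"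
      using finW xW by (simp add: rtsF lc mult_smult_right)
    finally show ?thesis using IH finW xW degF rtsF by simp
  qed
qed

section \<open>Frobenius-closed sets and the discriminant-like quantity\<close>

definition frob_closed :: "('a::finite_field) alg_closure set \<Rightarrow> bool" where
  "frob_closed S \<longleftrightarrow> (\<forall>x\<in>S. x ^ CARD('a) \<in> S)"

lemma frob_bij:
  fixes S :: "('a::finite_field) alg_closure set"
  assumes "finite S" "frob_closed S" shows "bij_betw (\<lambda>x. x ^ CARD('a)) S S"
proof -
  have inj: "inj_on (\<lambda>x. x ^ CARD('a)) S" by (auto intro!: inj_onI frob_inj)
  have "(\<lambda>x. x ^ CARD('a)) ` S = S"
    using endo_inj_surj[OF assms(1) _ inj] assms(2) by (auto simp: frob_closed_def)
  then show ?thesis using inj by (simp add: bij_betw_def)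
qed

lemma rts_frob_closed: "frob_closed (rts (map_poly to_ac (f :: 'a::finite_field poly)))"
  by (auto simp: frob_closed_def rts_def poly_frob)

definition Dl :: "'b::comm_ring_1 set \<Rightarrow> 'b" where
  "Dl S = (\<Prod>x\<in>S. \<Prod>y\<in>S-{x}. x - y)"

definition tri :: "nat \<Rightarrow> nat" where
  "tri n = (\<Sum>i<n. i)"

lemma tri_add: "tri (m + n) = tri m + tri n + m * n"
  by (induction n) (simp_all add: tri_def)

lemma tri_double: "2 * tri n = n * (n - 1)"
  by (induction n) (auto simp: tri_def algebra_simps)

definition GG :: "('a::finite_field) alg_closure set \<Rightarrow> 'a alg_closure" where
  "GG S = Dl S ^ ((CARD('a) - 1) div 2) * (- 1) ^ (((CARD('a) - 1) div 2) * tri (card S))"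

lemma R_frob:
  fixes S1 S2 :: "('a::finite_field) alg_closure set"
  assumes "finite S1" "finite S2" "frob_closed S1" "frob_closed S2"
  shows "(\<Prod>x\<in>S1. \<Prod>y\<in>S2. x - y) ^ CARD('a) = (\<Prod>x\<in>S1. \<Prod>y\<in>S2. x - y)"
proof -
  have "(\<Prod>x\<in>S1. \<Prod>y\<in>S2. x - y) ^ CARD('a) = (\<Prod>x\<in>S1. \<Prod>y\<in>S2. x ^ CARD('a) - y ^ CARD('a))"
    by (simp add: frob.hom_prod frob.hom_minus)
  also have "\<dots> = (\<Prod>x\<in>S1. \<Prod>y\<in>S2. x ^ CARD('a) - y)"
    by (intro prod.cong refl prod.reindex_bij_betw[OF frob_bij[OF assms(2,4)]])
  also have "\<dots> = (\<Prod>x\<in>S1. \<Prod>y\<in>S2. x - y)"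
    by (rule prod.reindex_bij_betw[OF frob_bij[OF assms(1,3)], of "\<lambda>x. \<Prod>y\<in>S2. x - y"])
  finally show ?thesis .
qed

lemma h2_lemma: "odd CARD('a::finite_field) \<Longrightarrow> 2 * ((CARD('a) - 1) div 2) = CARD('a) - 1"
  using card_ge2[where ?'a='a] by presburger

lemma pow_card_minus1_L:
  fixes R :: "('a::finite_field) alg_closure"
  assumes "R ^ CARD('a) = R" "R \<noteq> 0" shows "R ^ (CARD('a) - 1) = 1"
proof -
  have "R ^ (CARD('a) - 1) * R = R ^ CARD('a)"
    using card_ge2[where ?'a='a] by (simp add: power_Suc2[symmetric])
  then show ?thesis using assms by simp
qed

lemma GG_union:
  fixes S1 S2 :: "('a::finite_field) alg_closure set"
  assumes odd: "odd CARD('a)" and fin: "finite S1" "finite S2" and disj: "S1 \<inter> S2 = {}"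
    and clo: "frob_closed S1" "frob_closed S2"
  shows "GG (S1 \<union> S2) = GG S1 * GG S2"
proof -
  define h where "h = (CARD('a) - 1) div 2"
  define R where "R = (\<Prod>x\<in>S1. \<Prod>y\<in>S2. x - y)"
  define n1 where "n1 = card S1"
  define n2 where "n2 = card S2"
  have h2: "2 * h = CARD('a) - 1" unfolding h_def using h2_lemma[OF odd] .
  have A1: "(\<Prod>y\<in>(S1\<union>S2)-{x}. x - y) = (\<Prod>y\<in>S1-{x}. x - y) * (\<Prod>y\<in>S2. x - y)" if "x \<in> S1" for x
  proof -
    have "(S1\<union>S2)-{x} = (S1-{x}) \<union> S2" using that disj by auto
    moreover have "(S1 - {x}) \<inter> S2 = {}" using disj by auto
    ultimately show ?thesis using fin by (simp add: prod.union_disjoint)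
  qed
  have A2: "(\<Prod>y\<in>(S1\<union>S2)-{x}. x - y) = (\<Prod>y\<in>S1. x - y) * (\<Prod>y\<in>S2-{x}. x - y)" if "x \<in> S2" for x
  proof -
    have "(S1\<union>S2)-{x} = S1 \<union> (S2-{x})" using that disj by auto
    moreover have "S1 \<inter> (S2 - {x}) = {}" using disj by auto
    ultimately show ?thesis using fin by (simp add: prod.union_disjoint)
  qed
  have swap: "(\<Prod>x\<in>S2. \<Prod>y\<in>S1. x - y) = (-1) ^ (n1 * n2) * R"
  proof -
    have "(\<Prod>x\<in>S2. \<Prod>y\<in>S1. x - y) = (\<Prod>y\<in>S1. \<Prod>x\<in>S2. x - y)" by (rule prod.swap)
    also have "\<dots> = (\<Prod>y\<in>S1. (-1) ^ n2 * (\<Prod>x\<in>S2. y - x))"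
    proof (rule prod.cong[OF refl])
      fix y
      have "(\<Prod>x\<in>S2. x - y) = (\<Prod>x\<in>S2. (-1) * (y - x))" by simp
      also have "\<dots> = (\<Prod>x\<in>S2. (-1::'a alg_closure)) * (\<Prod>x\<in>S2. y - x)" by (rule prod.distrib)
      finally show "(\<Prod>x\<in>S2. x - y) = (-1) ^ n2 * (\<Prod>x\<in>S2. y - x)" by (simp add: n2_def)
    qed
    also have "\<dots> = (\<Prod>y\<in>S1. (-1::'a alg_closure) ^ n2) * R" by (simp add: prod.distrib R_def)
    also have "\<dots> = (-1) ^ (n1 * n2) * R" by (simp add: n1_def power_mult mult.commute)
    finally show ?thesis .
  qed
  have dl: "Dl (S1 \<union> S2) = Dl S1 * Dl S2 * (-1) ^ (n1 * n2) * R ^ 2"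
  proof -
    have "Dl (S1 \<union> S2) = (\<Prod>x\<in>S1. \<Prod>y\<in>(S1\<union>S2)-{x}. x - y) * (\<Prod>x\<in>S2. \<Prod>y\<in>(S1\<union>S2)-{x}. x - y)"
      unfolding Dl_def using fin disj by (simp add: prod.union_disjoint)
    also have "(\<Prod>x\<in>S1. \<Prod>y\<in>(S1\<union>S2)-{x}. x - y) = (\<Prod>x\<in>S1. (\<Prod>y\<in>S1-{x}. x - y) * (\<Prod>y\<in>S2. x - y))"
      by (rule prod.cong[OF refl]) (rule A1)
    also have "\<dots> = Dl S1 * R" by (simp add: prod.distrib Dl_def R_def)
    also have "(\<Prod>x\<in>S2. \<Prod>y\<in>(S1\<union>S2)-{x}. x - y) = (\<Prod>x\<in>S2. (\<Prod>y\<in>S1. x - y) * (\<Prod>y\<in>S2-{x}. x - y))"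
      by (rule prod.cong[OF refl]) (rule A2)
    also have "\<dots> = (\<Prod>x\<in>S2. \<Prod>y\<in>S1. x - y) * Dl S2" by (simp add: prod.distrib Dl_def)
    finally show ?thesis by (simp add: swap power2_eq_square mult_ac)
  qed
  have Rq: "R ^ CARD('a) = R" unfolding R_def by (rule R_frob[OF fin clo])
  have R0: "R \<noteq> 0" unfolding R_def using fin disj by (auto simp: prod_zero_iff)
  have R1: "(R ^ 2) ^ h = 1" using pow_card_minus1_L[OF Rq R0] by (simp add: power_mult[symmetric] h2)
  have e2: "((-1::'a alg_closure) ^ (h * (n1 * n2))) * (-1) ^ (h * (n1 * n2)) = 1"
    by (simp only: power_mult_distrib[symmetric]) simp
  have cardU: "card (S1 \<union> S2) = n1 + n2" using fin disj by (simp add: card_Un_disjoint n1_def n2_def)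
  have "GG (S1 \<union> S2) = (Dl S1 * Dl S2 * (-1) ^ (n1 * n2) * R ^ 2) ^ h * (-1) ^ (h * tri (n1 + n2))"
    by (simp add: GG_def dl cardU h_def)
  also have "\<dots> = (Dl S1 ^ h * (-1) ^ (h * tri n1)) * (Dl S2 ^ h * (-1) ^ (h * tri n2))
       * ((-1) ^ (h * (n1 * n2)) * (-1) ^ (h * (n1 * n2))) * (R ^ 2) ^ h"
    by (simp add: power_mult_distrib tri_add algebra_simps power_add power_mult[symmetric])
  also have "\<dots> = GG S1 * GG S2"
    unfolding GG_def h_def[symmetric] n1_def[symmetric] n2_def[symmetric] using e2 R1 by simp
  finally show ?thesis .
qed

interpretation frobp: map_poly_idom_hom "\<lambda>x::('a::finite_field) alg_closure. x ^ CARD('a)"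
  by unfold_locales (simp_all add: frob_add power_mult_distrib)

interpretation acp: map_poly_idom_hom "to_ac :: 'a::field \<Rightarrow> 'a alg_closure"
  by unfold_locales auto

lemma dl_delta:
  fixes \<beta> :: "nat \<Rightarrow> 'b::comm_ring_1"
  shows "(\<Prod>i<k. \<Prod>j\<in>{..<k}-{i}. \<beta> i - \<beta> j) = (-1) ^ tri k * (\<Prod>j<k. \<Prod>i<j. \<beta> i - \<beta> j) ^ 2"
proof (induction k)
  case 0 show ?case by (simp add: tri_def)
next
  case (Suc k)
  define P where "P = (\<Prod>i<k. \<beta> i - \<beta> k)"
  define D where "D = (\<Prod>j<k. \<Prod>i<j. \<beta> i - \<beta> j)"
  have "(\<Prod>i<Suc k. \<Prod>j\<in>{..<Suc k}-{i}. \<beta> i - \<beta> j)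
      = (\<Prod>i<k. \<Prod>j\<in>{..<Suc k}-{i}. \<beta> i - \<beta> j) * (\<Prod>j\<in>{..<Suc k}-{k}. \<beta> k - \<beta> j)"
    by (rule prod.lessThan_Suc)
  also have "(\<Prod>i<k. \<Prod>j\<in>{..<Suc k}-{i}. \<beta> i - \<beta> j) = (\<Prod>i<k. (\<beta> i - \<beta> k) * (\<Prod>j\<in>{..<k}-{i}. \<beta> i - \<beta> j))"
  proof (rule prod.cong[OF refl])
    fix i assume "i \<in> {..<k}"
    then have "{..<Suc k}-{i} = insert k ({..<k}-{i})" by auto
    then show "(\<Prod>j\<in>{..<Suc k}-{i}. \<beta> i - \<beta> j) = (\<beta> i - \<beta> k) * (\<Prod>j\<in>{..<k}-{i}. \<beta> i - \<beta> j)" by simp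
  qed
  also have "\<dots> = P * (\<Prod>i<k. \<Prod>j\<in>{..<k}-{i}. \<beta> i - \<beta> j)" by (simp add: prod.distrib P_def)
  also have "{..<Suc k}-{k} = {..<k}" by auto
  also have "(\<Prod>j<k. \<beta> k - \<beta> j) = (-1) ^ k * P"
  proof -
    have "(\<Prod>j<k. \<beta> k - \<beta> j) = (\<Prod>j<k. (-1) * (\<beta> j - \<beta> k))" by simp
    also have "\<dots> = (\<Prod>j<k. (-1::'b)) * P" unfolding P_def by (rule prod.distrib)
    finally show ?thesis by simp
  qed
  finally have L: "(\<Prod>i<Suc k. \<Prod>j\<in>{..<Suc k}-{i}. \<beta> i - \<beta> j) = P * ((-1) ^ tri k * D ^ 2) * ((-1) ^ k * P)"
    using Suc.IH by (simp add: D_def)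
  have DS: "(\<Prod>j<Suc k. \<Prod>i<j. \<beta> i - \<beta> j) = D * P" by (simp add: D_def P_def)
  have tS: "tri (Suc k) = tri k + k" by (simp add: tri_def)
  show ?case unfolding L DS tS by (simp add: power_add power2_eq_square algebra_simps)
qed

lemma delta_shift:
  fixes \<beta> :: "nat \<Rightarrow> 'b::comm_ring_1"
  assumes "\<beta> (Suc m) = \<beta> 0"
  shows "(\<Prod>j<Suc m. \<Prod>i<j. \<beta> (Suc i) - \<beta> (Suc j)) = (-1) ^ m * (\<Prod>j<Suc m. \<Prod>i<j. \<beta> i - \<beta> j)"
proof -
  define A where "A = (\<Prod>j<m. \<Prod>i<j. \<beta> (Suc i) - \<beta> (Suc j))"
  have L: "(\<Prod>j<Suc m. \<Prod>i<j. \<beta> (Suc i) - \<beta> (Suc j)) = A * (\<Prod>i<m. \<beta> (Suc i) - \<beta> 0)"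
    by (simp add: A_def assms)
  have in1: "(\<Prod>i<Suc j. \<beta> i - \<beta> (Suc j)) = (\<beta> 0 - \<beta> (Suc j)) * (\<Prod>i<j. \<beta> (Suc i) - \<beta> (Suc j))" for j
    by (rule prod.lessThan_Suc_shift)
  have R: "(\<Prod>j<Suc m. \<Prod>i<j. \<beta> i - \<beta> j) = (\<Prod>j<m. \<beta> 0 - \<beta> (Suc j)) * A"
  proof -
    have "(\<Prod>j<Suc m. \<Prod>i<j. \<beta> i - \<beta> j) = (\<Prod>i<0. \<beta> i - \<beta> 0) * (\<Prod>j<m. \<Prod>i<Suc j. \<beta> i - \<beta> (Suc j))"
      by (rule prod.lessThan_Suc_shift)
    also have "\<dots> = (\<Prod>j<m. (\<beta> 0 - \<beta> (Suc j)) * (\<Prod>i<j. \<beta> (Suc i) - \<beta> (Suc j)))"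
      by (simp only: in1) simp
    also have "\<dots> = (\<Prod>j<m. \<beta> 0 - \<beta> (Suc j)) * A" by (simp add: prod.distrib A_def)
    finally show ?thesis .
  qed
  have N: "(\<Prod>i<m. \<beta> (Suc i) - \<beta> 0) = (-1) ^ m * (\<Prod>j<m. \<beta> 0 - \<beta> (Suc j))"
  proof -
    have "(\<Prod>i<m. \<beta> (Suc i) - \<beta> 0) = (\<Prod>i<m. (-1) * (\<beta> 0 - \<beta> (Suc i)))" by simp
    also have "\<dots> = (\<Prod>i<m. (-1::'b)) * (\<Prod>j<m. \<beta> 0 - \<beta> (Suc j))" by (rule prod.distrib)
    finally show ?thesis by simp
  qed
  show ?thesis unfolding L R N by (simp add: mult_ac)
qed

lemma GG_irred:
  fixes g :: "'a::finite_field poly"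
  assumes odd: "odd CARD('a)" and irr: "Factorial_Ring.irreducible g" and sepg: "sep (map_poly to_ac g)"
  shows "card (rts (map_poly to_ac g)) = degree g \<and> GG (rts (map_poly to_ac g)) = (-1) ^ (degree g + 1)"
proof -
  define G where "G = map_poly to_ac g"
  define S where "S = rts G"
  have g0: "g \<noteq> 0" using irr by (auto simp: Factorial_Ring.irreducible_def)
  have degG: "degree G = degree g" unfolding G_def by (rule degree_map_poly) simp
  have "\<not> is_unit g" using irr by (auto simp: Factorial_Ring.irreducible_def)
  then have degpos: "degree g > 0" using is_unit_iff_degree[OF g0] g0 by auto
  have G0: "G \<noteq> 0" unfolding G_def using sepg by (rule sep_nonzero)
  have spl: "G = smult (lead_coeff G) (\<Prod>x\<in>S. [:-x,1:])" "card S = degree G"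
    using split_sep[OF sepg] by (simp_all add: S_def G_def)
  have finS: "finite S" unfolding S_def using G0 by (rule finite_rts)
  have cloS: "frob_closed S" unfolding S_def G_def by (rule rts_frob_closed)
  obtain \<alpha> where \<alpha>: "\<alpha> \<in> S"
    using alg_closed_imp_poly_has_root[of G] degpos degG by (auto simp: S_def rts_def)
  define \<beta> where "\<beta> i = \<alpha> ^ (CARD('a) ^ i)" for i
  have \<beta>0: "\<beta> 0 = \<alpha>" by (simp add: \<beta>_def)
  have \<beta>Suc: "\<beta> (Suc i) = \<beta> i ^ CARD('a)" for i by (simp only: \<beta>_def power_Suc2 power_mult)
  have \<beta>add: "\<beta> (i + j) = \<beta> i ^ (CARD('a) ^ j)" for i j by (simp only: \<beta>_def power_add power_mult)
  have \<beta>S: "\<beta> i \<in> S" for i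
  proof (induction i)
    case 0 then show ?case using \<alpha> by (simp add: \<beta>0)
  next
    case (Suc i) then show ?case using cloS by (simp add: \<beta>Suc frob_closed_def)
  qed
  have bk: "\<beta> (j - i) = \<alpha>" if "i \<le> j" "\<beta> i = \<beta> j" for i j
  proof -
    have "\<beta> (j - i) ^ (CARD('a) ^ i) = \<beta> j" using \<beta>add[of "j - i" i] that(1) by simp
    also have "\<dots> = \<beta> i" using that(2) by simp
    also have "\<dots> = \<alpha> ^ (CARD('a) ^ i)" by (simp add: \<beta>_def)
    finally show ?thesis by (rule frob_iter_inj)
  qed
  have ex: "\<exists>k>0. \<beta> k = \<alpha>"
  proof -
    have "\<not> inj_on \<beta> {..card S}"
    proof
      assume "inj_on \<beta> {..card S}"
      then have "card (\<beta> ` {..card S}) = Suc (card S)" by (simp add: card_image)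
      moreover have "\<beta> ` {..card S} \<subseteq> S" using \<beta>S by auto
      ultimately have "Suc (card S) \<le> card S" using card_mono[OF finS] by metis
      then show False by simp
    qed
    then obtain i j where ij: "i \<noteq> j" "\<beta> i = \<beta> j" by (auto simp: inj_on_def)
    show ?thesis
    proof (cases "i < j")
      case True then show ?thesis using bk[of i j] ij by (intro exI[of _ "j - i"]) auto
    next
      case False then have "j < i" using ij by simp
      then show ?thesis using bk[of j i] ij by (intro exI[of _ "i - j"]) auto
    qed
  qed
  define k where "k = (LEAST k. k > 0 \<and> \<beta> k = \<alpha>)"
  have k: "k > 0" "\<beta> k = \<alpha>" using LeastI_ex[OF ex] unfolding k_def by auto
  have kmin: "\<not> (0 < j \<and> \<beta> j = \<alpha>)" if "j < k" for j
    using not_less_Least[of j "\<lambda>k. k > 0 \<and> \<beta> k = \<alpha>"] that unfolding k_def by blast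
  have injk: "inj_on \<beta> {..<k}"
  proof (rule inj_onI)
    fix i j assume ij: "i \<in> {..<k}" "j \<in> {..<k}" "\<beta> i = \<beta> j"
    show "i = j"
    proof (rule ccontr)
      assume "i \<noteq> j"
      then consider "i < j" | "j < i" by linarith
      then show False
      proof cases
        case 1 then have "\<beta> (j - i) = \<alpha>" using bk[of i j] ij by simp
        then show False using kmin[of "j - i"] 1 ij by (auto simp: less_imp_diff_less)
      next
        case 2 then have "\<beta> (i - j) = \<alpha>" using bk[of j i] ij by simp
        then show False using kmin[of "i - j"] 2 ij by (auto simp: less_imp_diff_less)
      qed
    qed
  qed
  define Ob where "Ob = \<beta> ` {..<k}"
  have cardO: "card Ob = k" using injk by (simp add: Ob_def card_image)
  have ObS: "Ob \<subseteq> S" using \<beta>S by (auto simp: Ob_def)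
  have finO: "finite Ob" by (simp add: Ob_def)
  have cloO: "frob_closed Ob"
    unfolding frob_closed_def Ob_def
  proof
    fix x assume "x \<in> \<beta> ` {..<k}"
    then obtain i where i: "i < k" "x = \<beta> i" by auto
    show "x ^ CARD('a) \<in> \<beta> ` {..<k}"
    proof (cases "Suc i < k")
      case True
      have "x ^ CARD('a) = \<beta> (Suc i)" using i by (simp add: \<beta>Suc)
      then show ?thesis using True by auto
    next
      case False then have "Suc i = k" using i by simp
      then have "x ^ CARD('a) = \<beta> 0" using i k \<beta>0 by (simp add: \<beta>Suc[symmetric])
      then show ?thesis using k(1) by auto
    qed
  qed
  define H where "H = (\<Prod>x\<in>Ob. [:-x, 1:])"
  have mapH: "map_poly (\<lambda>x. x ^ CARD('a)) H = H"
  proof -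
    have "map_poly (\<lambda>x. x ^ CARD('a)) H = (\<Prod>x\<in>Ob. [:-(x ^ CARD('a)), 1:])"
      unfolding H_def by (simp add: frobp.hom_prod frob.hom_uminus)
    also have "\<dots> = H" unfolding H_def
      by (rule prod.reindex_bij_betw[OF frob_bij[OF finO cloO], of "\<lambda>x. [:-x, 1:]"])
    finally show ?thesis .
  qed
  have coeffH: "coeff H i \<in> range to_ac" for i
  proof -
    have "coeff (map_poly (\<lambda>x. x ^ CARD('a)) H) i = coeff H i ^ CARD('a)" by (simp add: coeff_map_poly)
    then have "coeff H i ^ CARD('a) = coeff H i" using mapH by simp
    then show ?thesis by (rule fixed_in_range)
  qed
  define h0 where "h0 = map_poly of_ac H"
  have Hh0: "map_poly to_ac h0 = H"
    by (rule poly_eqI) (simp add: h0_def coeff_map_poly to_ac_of_ac[OF coeffH])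
  have "H dvd G"
  proof -
    have "(\<Prod>x\<in>S. [:-x,1:]) = (\<Prod>x\<in>S - Ob. [:-x,1:]) * H" unfolding H_def by (rule prod.subset_diff[OF ObS finS])
    then have "H dvd (\<Prod>x\<in>S. [:-x,1:])" by simp
    then show ?thesis by (subst spl(1)) (rule dvd_smult)
  qed
  then have h0g: "h0 dvd g" using Hh0 unfolding G_def by (metis ac.dvd_map_poly_hom_imp_dvd)
  have degH: "degree H = k"
    unfolding H_def by (subst degree_prod_eq_sum_degree) (auto simp: cardO)
  have degh0: "degree h0 = k" using degH Hh0 degree_map_poly[of to_ac h0] by simp
  obtain w where gw: "g = h0 * w" using h0g by (elim dvdE)
  have h00: "h0 \<noteq> 0" using degh0 k(1) by auto
  have w0: "w \<noteq> 0" using gw g0 by auto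
  have "\<not> is_unit h0" using degh0 k(1) is_unit_iff_degree[OF h00] by simp
  then have "is_unit w" using Factorial_Ring.irreducibleD[OF irr gw] by blast
  then have "degree w = 0" using is_unit_iff_degree[OF w0] by simp
  then have degg: "degree g = k" using gw h00 w0 degh0 by (simp add: degree_mult_eq)
  have SO: "S = Ob"
    using card_subset_eq[OF finS ObS] cardO spl(2) degG degg by simp
  define \<delta> where "\<delta> = (\<Prod>j<k. \<Prod>i<j. \<beta> i - \<beta> j)"
  have DlS: "Dl S = (-1) ^ tri k * \<delta> ^ 2"
  proof -
    have "Dl S = (\<Prod>i<k. \<Prod>y\<in>\<beta> ` {..<k} - {\<beta> i}. \<beta> i - y)"
      unfolding SO Ob_def Dl_def by (subst prod.reindex[OF injk]) (simp add: o_def)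
    also have "\<dots> = (\<Prod>i<k. \<Prod>j\<in>{..<k}-{i}. \<beta> i - \<beta> j)"
    proof (rule prod.cong[OF refl])
      fix i assume i: "i \<in> {..<k}"
      have "\<beta> ` {..<k} - {\<beta> i} = \<beta> ` ({..<k} - {i})" using injk i by (auto simp: inj_on_def)
      moreover have "inj_on \<beta> ({..<k} - {i})" using injk by (rule inj_on_subset) auto
      ultimately show "(\<Prod>y\<in>\<beta> ` {..<k} - {\<beta> i}. \<beta> i - y) = (\<Prod>j\<in>{..<k}-{i}. \<beta> i - \<beta> j)"
        by (simp add: prod.reindex)
    qed
    also have "\<dots> = (-1) ^ tri k * \<delta> ^ 2" unfolding \<delta>_def by (rule dl_delta)
    finally show ?thesis .
  qed
  obtain m where m: "k = Suc m" using k(1) gr0_conv_Suc by blast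
  have \<delta>q: "\<delta> ^ CARD('a) = (-1) ^ m * \<delta>"
  proof -
    have "\<delta> ^ CARD('a) = (\<Prod>j<k. \<Prod>i<j. \<beta> (Suc i) - \<beta> (Suc j))"
      unfolding \<delta>_def by (simp add: frob.hom_prod frob.hom_minus \<beta>Suc)
    also have "\<dots> = (-1) ^ m * \<delta>" unfolding \<delta>_def m
      by (rule delta_shift) (use k m \<beta>0 in simp)
    finally show ?thesis .
  qed
  have \<delta>0: "\<delta> \<noteq> 0" unfolding \<delta>_def using injk by (auto simp: prod_zero_iff inj_on_def)
  have "\<delta> ^ (CARD('a) - 1) * \<delta> = \<delta> ^ CARD('a)"
    using card_ge2[where ?'a='a] by (simp add: power_Suc2[symmetric])
  then have \<delta>1: "\<delta> ^ (CARD('a) - 1) = (-1) ^ m" using \<delta>q \<delta>0 by simp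
  define h where "h = (CARD('a) - 1) div 2"
  have h2: "2 * h = CARD('a) - 1" unfolding h_def using h2_lemma[OF odd] .
  have "GG S = ((-1) ^ tri k * \<delta> ^ 2) ^ h * (-1) ^ (h * tri k)"
    unfolding GG_def DlS h_def[symmetric] using spl(2) degG degg by simp
  also have "\<dots> = ((-1) ^ (h * tri k) * (-1) ^ (h * tri k)) * \<delta> ^ (2 * h)"
    by (simp add: power_mult_distrib power_mult[symmetric] mult.commute)
  also have "\<dots> = (-1) ^ m"
    by (simp only: power_mult_distrib[symmetric] h2 \<delta>1) simp
  finally have "GG S = (-1) ^ (degree g + 1)" by (simp add: degg m)
  then show ?thesis using spl(2) degG unfolding S_def G_def by simp
qed

lemma deg_ac [simp]: "degree (map_poly to_ac (p :: 'a::field poly)) = degree p"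
  by (rule degree_map_poly) simp

lemma lc_ac [simp]: "lead_coeff (map_poly to_ac (p :: 'a::field poly)) = to_ac (lead_coeff p)"
  by (simp add: coeff_map_poly)

lemma sep_squarefree:
  fixes f :: "'a::{finite_field,field_gcd} poly"
  assumes sepf: "sep (map_poly to_ac f)" shows "squarefree f"
  unfolding squarefree_def
proof (intro allI impI)
  fix h assume hh: "h ^ 2 dvd f"
  have "map_poly to_ac f \<noteq> 0" using sepf by (rule sep_nonzero)
  then have f0: "f \<noteq> 0" by auto
  have h0: "h \<noteq> 0" using hh f0 by auto
  show "is_unit h"
  proof (rule ccontr)
    assume "\<not> is_unit h"
    then have "degree h > 0" using is_unit_iff_degree[OF h0] h0 by auto
    then obtain x where x: "poly (map_poly to_ac h) x = 0"
      using alg_closed_imp_poly_has_root[of "map_poly to_ac h"] by auto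
    have "map_poly to_ac (h * h) dvd map_poly to_ac f" using hh by (intro acp.hom_dvd) (simp add: power2_eq_square)
    then have "map_poly to_ac h * map_poly to_ac h dvd map_poly to_ac f" by (simp only: acp.hom_mult)
    then show False using sep_square[OF sepf _ x] by blast
  qed
qed

lemma GG_main:
  fixes f :: "'a::{finite_field,field_gcd} poly"
  assumes odd: "odd CARD('a)" and sepf: "sep (map_poly to_ac f)"
  shows "GG (rts (map_poly to_ac f)) = (-1) ^ (degree f + card (prime_factors f))"
  using sepf
proof (induction "degree f" arbitrary: f rule: less_induct)
  case (less f)
  have F0: "map_poly to_ac f \<noteq> 0" using less.prems by (rule sep_nonzero)
  then have f0: "f \<noteq> 0" by auto
  show ?case
  proof (cases "degree f = 0")
    case True
    then obtain c where c: "f = [:c:]" by (elim degree_eq_zeroE)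
    with f0 have c0: "c \<noteq> 0" by simp
    have "is_unit f" using True is_unit_iff_degree[OF f0] by simp
    then have pf: "prime_factors f = {}" by (simp add: prime_factorization_unit)
    have "rts (map_poly to_ac f) = {}" using c0 by (simp add: rts_def c)
    then show ?thesis using True pf by (simp add: GG_def Dl_def tri_def)
  next
    case False
    then have "\<not> is_unit f" using is_unit_iff_degree[OF f0] by simp
    then obtain g where g: "g dvd f" "prime g" using prime_divisor_exists[OF f0] by blast
    then obtain f1 where ff: "f = g * f1" by (elim dvdE)
    have g0: "g \<noteq> 0" and f10: "f1 \<noteq> 0" using ff f0 by auto
    have pe: "prime_elem g" using g(2) by blast
    have irr: "Factorial_Ring.irreducible g" using pe by (rule prime_elem_imp_irreducible)
    have "\<not> is_unit g" using pe by (rule prime_elem_not_unit)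
    then have degg: "degree g > 0" using is_unit_iff_degree[OF g0] g0 by auto
    have degf: "degree f = degree g + degree f1" using ff g0 f10 by (simp add: degree_mult_eq)
    define G where "G = map_poly to_ac g"
    define F1 where "F1 = map_poly to_ac f1"
    define F where "F = map_poly to_ac f"
    have FGF1: "F = G * F1" unfolding F_def G_def F1_def ff by (rule acp.hom_mult)
    have sepF: "sep F" using less.prems by (simp add: F_def)
    have sepg: "sep G" using sepF by (rule sep_dvd) (simp add: FGF1)
    have sepf1: "sep F1" using sepF by (rule sep_dvd) (simp add: FGF1)
    have IH: "GG (rts F1) = (-1) ^ (degree f1 + card (prime_factors f1))"
      using less.hyps[of f1] degf degg sepf1 unfolding F1_def by simp
    have Ig: "card (rts G) = degree g \<and> GG (rts G) = (-1) ^ (degree g + 1)"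
      using GG_irred[OF odd irr] sepg unfolding G_def by blast
    have rtsU: "rts F = rts G \<union> rts F1" by (auto simp: rts_def FGF1)
    have disj: "rts G \<inter> rts F1 = {}"
    proof (rule ccontr)
      assume "rts G \<inter> rts F1 \<noteq> {}"
      then obtain x where x: "poly G x = 0" "poly F1 x = 0" by (auto simp: rts_def)
      then have "poly F x = 0" "poly (pderiv F) x = 0" by (simp_all add: FGF1 pderiv_mult)
      with sepF show False by (simp add: sep_def)
    qed
    have G0: "G \<noteq> 0" using sepg by (rule sep_nonzero)
    have F10: "F1 \<noteq> 0" using sepf1 by (rule sep_nonzero)
    have GGU: "GG (rts F) = GG (rts G) * GG (rts F1)"
      using GG_union[OF odd finite_rts[OF G0] finite_rts[OF F10] disj] rtsU
      unfolding G_def F1_def by (simp add: rts_frob_closed)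
    have ng: "g \<notin> prime_factors f1"
    proof
      assume "g \<in> prime_factors f1"
      then have "g dvd f1" by auto
      then have "g * g dvd f" unfolding ff by (rule mult_dvd_mono[OF dvd_refl])
      then have "map_poly to_ac (g * g) dvd F" unfolding F_def by (rule acp.hom_dvd)
      then have GG2: "G * G dvd F" unfolding G_def by (simp only: acp.hom_mult)
      obtain x where "poly G x = 0"
        using alg_closed_imp_poly_has_root[of G] degg by (auto simp: G_def)
      then show False using sep_square[OF sepF GG2] by blast
    qed
    have pf: "prime_factors f = insert g (prime_factors f1)"
      using ff g0 f10 g(2) by (simp add: prime_factors_product prime_factorization_prime)
    have "card (prime_factors f) = Suc (card (prime_factors f1))" using pf ng by simp
    then show ?thesis using GGU Ig IH rtsU degf unfolding F_def[symmetric]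
      by (simp add: power_add)
  qed
qed

lemma of_int_pm1_inj:
  assumes "CHAR('a::finite_field) \<noteq> 2" "i \<in> {-1, 1}" "j \<in> {-1, 1}" "(of_int i :: 'a) = of_int j"
  shows "i = j"
proof (rule ccontr)
  assume "i \<noteq> j"
  then have "(1::'a) = -1" using assms(2-4) by auto
  then have two: "(of_nat 2 :: 'a) = 0" by (simp add: eq_neg_iff_add_eq_0)
  have "CHAR('a) dvd 2" using two of_nat_eq_0_iff_char_dvd[where ?'a='a, of 2] by blast
  then have "CHAR('a) \<le> 2" by (rule dvd_imp_le) simp
  moreover have "CHAR('a) \<ge> 2" using prime_ge_2_nat[OF CHAR_prime[where ?'a='a]] .
  ultimately show False using assms(1) by simp
qed

lemma quad_char_pm1: "(x::'a::field) \<noteq> 0 \<Longrightarrow> quad_char x \<in> {-1, 1}"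
  by (simp add: quad_char_def)

lemma pm1_parity: "(x::int) \<in> {-1, 1} \<Longrightarrow> (even a \<longleftrightarrow> even b) \<Longrightarrow> x ^ a = x ^ b"
  by (cases "even a") auto

lemma core:
  fixes F g2 :: "'a::{finite_field,field_gcd} poly" and b :: 'a
  assumes chr: "CHAR('a) \<noteq> 2" and sepF: "sep (map_poly to_ac F)"
    and dF: "pderiv F = smult b (g2 ^ (2 * CHAR('a)))"
  shows "((b / lead_coeff F) ^ ((CARD('a) - 1) div 2)) ^ degree F * (of_int (quad_char (-1 :: 'a))) ^ tri (degree F)
         = (-1) ^ (degree F + card (prime_factors F))"
proof -
  have odd: "odd CARD('a)" using card_odd[OF chr] .
  define h where "h = (CARD('a) - 1) div 2"
  have h2: "2 * h = CARD('a) - 1" unfolding h_def using h2_lemma[OF odd] .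
  define FL where "FL = map_poly to_ac F"
  define G2 where "G2 = map_poly to_ac g2"
  define S where "S = rts FL"
  define n where "n = degree F"
  define cL where "cL = lead_coeff FL"
  have FL0: "FL \<noteq> 0" using sepF unfolding FL_def by (rule sep_nonzero)
  then have F0: "F \<noteq> 0" by (auto simp: FL_def)
  have cL: "cL = to_ac (lead_coeff F)" by (simp add: cL_def FL_def)
  have cL0: "cL \<noteq> 0" using F0 by (simp add: cL)
  have sepFL: "sep FL" using sepF by (simp add: FL_def)
  have spl: "FL = smult cL (\<Prod>x\<in>S. [:-x,1:])" "card S = n"
    using split_sep[OF sepFL] by (simp_all add: S_def cL_def FL_def n_def)
  have finS: "finite S" unfolding S_def using FL0 by (rule finite_rts)
  have cloS: "frob_closed S" unfolding S_def FL_def by (rule rts_frob_closed)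
  have dFL: "pderiv FL = smult (to_ac b) (G2 ^ (2 * CHAR('a)))"
    unfolding FL_def G2_def
    by (simp add: ac.map_poly_pderiv[symmetric] dF ac.map_poly_hom_smult acp.hom_power)
  have pdx: "poly (pderiv FL) x = cL * (\<Prod>y\<in>S-{x}. x - y)" if "x \<in> S" for x
  proof -
    define W where "W = (\<Prod>y\<in>S-{x}. [:-y,1:])"
    have "(\<Prod>y\<in>S. [:-y,1:]) = [:-x,1:] * W" unfolding W_def using finS that by (rule prod.remove)
    then have FLe: "FL = smult cL ([:-x,1:] * W)" using spl(1) by simp
    have "pderiv FL = smult cL (pderiv ([:-x,1:] * W))" by (subst FLe) (rule pderiv_smult)
    then have "poly (pderiv FL) x = cL * poly (pderiv ([:-x,1:] * W)) x" by (simp only: poly_smult)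
    also have "poly (pderiv ([:-x,1:] * W)) x = poly W x" unfolding pderiv_mult by (simp add: pderiv_pCons)
    finally have "poly (pderiv FL) x = cL * poly W x" .
    also have "poly W x = (\<Prod>y\<in>S-{x}. x - y)" by (simp add: W_def poly_prod)
    finally show ?thesis .
  qed
  have G2ne: "poly G2 x \<noteq> 0" if "x \<in> S" for x
  proof
    assume "poly G2 x = 0"
    then have "poly (pderiv FL) x = 0" by (simp add: dFL)
    moreover have "poly FL x = 0" using that by (simp add: S_def rts_def)
    ultimately show False using sepFL by (simp add: sep_def)
  qed
  define P where "P = (\<Prod>x\<in>S. poly G2 x)"
  have P0: "P \<noteq> 0" using G2ne finS by (simp add: P_def prod_zero_iff)
  have Pq: "P ^ CARD('a) = P"
  proof -
    have "P ^ CARD('a) = (\<Prod>x\<in>S. poly G2 (x ^ CARD('a)))"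
      by (simp add: P_def frob.hom_prod G2_def poly_frob)
    also have "\<dots> = P" unfolding P_def
      by (rule prod.reindex_bij_betw[OF frob_bij[OF finS cloS], of "poly G2"])
    finally show ?thesis .
  qed
  have P1: "P ^ (2 * h) = 1" using pow_card_minus1_L[OF Pq P0] h2 by simp
  have "(\<Prod>x\<in>S. poly (pderiv FL) x) = (\<Prod>x\<in>S. cL * (\<Prod>y\<in>S-{x}. x - y))"
    by (rule prod.cong[OF refl]) (rule pdx)
  also have "\<dots> = (\<Prod>x\<in>S. cL) * Dl S" unfolding Dl_def by (rule prod.distrib)
  also have "\<dots> = cL ^ n * Dl S" using spl(2) by simp
  finally have e1: "(\<Prod>x\<in>S. poly (pderiv FL) x) = cL ^ n * Dl S" .
  have "(\<Prod>x\<in>S. poly (pderiv FL) x) = (\<Prod>x\<in>S. to_ac b * poly G2 x ^ (2 * CHAR('a)))"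
    by (simp add: dFL)
  also have "\<dots> = (\<Prod>x\<in>S. to_ac b) * P ^ (2 * CHAR('a))"
    by (simp add: prod.distrib prod_power_distrib P_def)
  also have "\<dots> = to_ac b ^ n * P ^ (2 * CHAR('a))" using spl(2) by simp
  finally have "cL ^ n * Dl S = to_ac b ^ n * P ^ (2 * CHAR('a))" using e1 by simp
  then have DlS: "Dl S = (to_ac b / cL) ^ n * P ^ (2 * CHAR('a))"
    using cL0 by (simp add: field_simps power_divide)
  have "Dl S ^ h = ((to_ac b / cL) ^ h) ^ n * (P ^ (2 * h)) ^ CHAR('a)"
    unfolding DlS by (simp add: power_mult_distrib flip: power_mult) (simp add: mult_ac)
  also have "\<dots> = to_ac (((b / lead_coeff F) ^ h) ^ n)" using P1 by (simp add: cL)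
  finally have DlSh: "Dl S ^ h = to_ac (((b / lead_coeff F) ^ h) ^ n)" .
  have eul: "(-1::'a alg_closure) ^ h = to_ac (of_int (quad_char (-1::'a)))"
  proof -
    have "(-1::'a) ^ h = of_int (quad_char (-1::'a))" unfolding h_def by (rule euler_crit[OF chr]) simp
    then have "to_ac ((-1::'a) ^ h) = to_ac (of_int (quad_char (-1::'a)))" by simp
    then show ?thesis by simp
  qed
  have "GG S = Dl S ^ h * ((-1) ^ h) ^ tri n"
    unfolding GG_def h_def[symmetric] spl(2) by (simp add: power_mult)
  also have "\<dots> = to_ac (((b / lead_coeff F) ^ h) ^ n * (of_int (quad_char (-1::'a))) ^ tri n)"
    by (simp add: DlSh eul)
  finally have A: "GG S = to_ac (((b / lead_coeff F) ^ h) ^ n * (of_int (quad_char (-1::'a))) ^ tri n)" .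
  have B: "GG S = (-1) ^ (n + card (prime_factors F))"
    using GG_main[OF odd sepF] unfolding S_def FL_def n_def .
  have "to_ac (((b / lead_coeff F) ^ h) ^ n * (of_int (quad_char (-1::'a))) ^ tri n)
        = to_ac ((-1) ^ (n + card (prime_factors F)))" using A B by simp
  then show ?thesis unfolding h_def n_def by (simp only: to_ac_eq_iff)
qed

lemma pm1_pow: "(x::int) \<in> {-1, 1} \<Longrightarrow> x ^ k \<in> {-1, 1}"
  by (cases "even k") auto

theorem lemma3p5:
  fixes a b :: "'a::{finite_field, field_gcd}" and g1 g2 :: "'a poly"
  assumes "CHAR('a) \<noteq> 2"
    and "a \<noteq> 0" and "b \<noteq> 0"
    and "coprime g1 g2" and "\<not> (g1 = 0 \<and> g2 = 0)"
  shows "poly_mobius (smult a (g1 ^ (2 * CHAR('a))) + smult b ([:0, 1:] * g2 ^ (2 * CHAR('a)))) =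
    (if g2 \<noteq> 0 \<and> (g1 = 0 \<or> degree g1 \<le> degree g2)
     then - ((quad_char (-1 :: 'a)) ^ degree g2)
     else (quad_char (-1 :: 'a)) ^ degree g1)"
proof -
  define F where "F = smult a (g1 ^ (2 * CHAR('a))) + smult b ([:0, 1:] * g2 ^ (2 * CHAR('a)))"
  have chr: "CHAR('a) \<noteq> 2" using assms(1) .
  have oddp: "odd CHAR('a)"
  proof -
    have "CHAR('a) > 2" using chr prime_ge_2_nat[OF CHAR_prime[where ?'a='a]] by linarith
    then show ?thesis using prime_odd_nat[OF CHAR_prime[where ?'a='a]] by blast
  qed
  have pd: "pderiv (h ^ (2 * CHAR('a))) = 0" for h :: "'a poly"
    by (simp add: pderiv_power)
  have dF: "pderiv F = smult b (g2 ^ (2 * CHAR('a)))"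
    unfolding F_def by (simp add: pderiv_add pderiv_smult pderiv_mult pd pderiv_pCons)
  show ?thesis
  proof (cases "g2 = 0")
    case True
    then have u: "is_unit g1" using assms(4) by simp
    then have g10: "g1 \<noteq> 0" by auto
    have dg1: "degree g1 = 0" using u is_unit_iff_degree[OF g10] by simp
    have Fe: "F = smult a (g1 ^ (2 * CHAR('a)))" using True by (simp add: F_def)
    have F0: "F \<noteq> 0" using assms(2) g10 by (simp add: Fe)
    have "degree F = 0" using dg1 g10 by (simp add: Fe degree_power_eq)
    then have uF: "is_unit F" using is_unit_iff_degree[OF F0] by simp
    have sq: "squarefree F" unfolding squarefree_def
    proof (intro allI impI)
      fix y assume "y ^ 2 dvd F"
      then have "is_unit (y ^ 2)" using uF dvd_unit_imp_unit by blast
      then show "is_unit y" by (metis is_unit_mult_iff power2_eq_square)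
    qed
    have "prime_factors F = {}" using uF by (simp add: prime_factorization_unit)
    then have "poly_mobius F = 1" by (simp add: poly_mobius_def sq)
    then show ?thesis using True dg1 unfolding F_def[symmetric] by simp
  next
    case False
    have g2ne: "g2 \<noteq> 0" using False .
    have "gcd g1 g2 = 1" using assms(4) by (simp add: coprime_iff_gcd_eq_1)
    then obtain u v where uv: "u * g1 + v * g2 = 1"
      using bezout_coefficients_fst_snd[of g1 g2] by metis
    have uvL: "map_poly to_ac u * map_poly to_ac g1 + map_poly to_ac v * map_poly to_ac g2 = 1"
      using arg_cong[OF uv, of "map_poly to_ac"] by (simp add: acp.hom_add acp.hom_mult)
    have sepF: "sep (map_poly to_ac F)"
      unfolding sep_def
    proof (intro allI impI)
      fix x assume Fx: "poly (map_poly to_ac F) x = 0"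
      show "poly (pderiv (map_poly to_ac F)) x \<noteq> 0"
      proof
        assume "poly (pderiv (map_poly to_ac F)) x = 0"
        then have "poly (map_poly to_ac (pderiv F)) x = 0" by (simp add: ac.map_poly_pderiv)
        then have g2x: "poly (map_poly to_ac g2) x = 0" using assms(3)
          by (simp add: dF ac.map_poly_hom_smult acp.hom_power)
        have "poly (map_poly to_ac F) x = to_ac a * poly (map_poly to_ac g1) x ^ (2 * CHAR('a))
              + to_ac b * (x * poly (map_poly to_ac g2) x ^ (2 * CHAR('a)))"
          by (simp add: F_def acp.hom_add ac.map_poly_hom_smult acp.hom_mult acp.hom_power ac.map_poly_pCons_hom)
        moreover have "(0::'a alg_closure) ^ (2 * CHAR('a)) = 0" by simp
        ultimately have "poly (map_poly to_ac g1) x = 0" using Fx g2x assms(2) by simp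
        then have "poly (map_poly to_ac u * map_poly to_ac g1 + map_poly to_ac v * map_poly to_ac g2) x = 0"
          using g2x by simp
        then show False using uvL by simp
      qed
    qed
    have sq: "squarefree F" using sep_squarefree[OF sepF] .
    define r where "r = card (prime_factors F)"
    define n where "n = degree F"
    define \<chi> where "\<chi> = quad_char (-1::'a)"
    define h where "h = (CARD('a) - 1) div 2"
    have h2: "2 * h = CARD('a) - 1" unfolding h_def using h2_lemma[OF card_odd[OF chr]] .
    have mu: "poly_mobius F = (-1) ^ r" by (simp add: poly_mobius_def sq r_def)
    have \<chi>pm: "\<chi> \<in> {-1, 1}" unfolding \<chi>_def by (rule quad_char_pm1) simp
    have C: "((b / lead_coeff F) ^ h) ^ n * (of_int \<chi>) ^ tri n = (-1) ^ (n + r)"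
      using core[OF chr sepF dF] by (simp add: h_def n_def r_def \<chi>_def)
    define A where "A = smult a (g1 ^ (2 * CHAR('a)))"
    define B where "B = smult b ([:0, 1:] * g2 ^ (2 * CHAR('a)))"
    have FAB: "F = A + B" by (simp add: F_def A_def B_def)
    have degB: "degree B = 1 + 2 * CHAR('a) * degree g2" using assms(3) g2ne
      by (simp add: B_def degree_mult_eq degree_power_eq)
    have lcB: "lead_coeff B = b * lead_coeff g2 ^ (2 * CHAR('a))"
      by (simp add: B_def lead_coeff_mult lead_coeff_power)
    have fin: "(of_int (\<chi> ^ tri n) :: 'a) = of_int ((-1) ^ (n + r)) \<Longrightarrow> \<chi> ^ tri n = (-1) ^ (n + r)"
      by (rule of_int_pm1_inj[OF chr pm1_pow[OF \<chi>pm] pm1_pow]) simp_all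
    show ?thesis
    proof (cases "g1 = 0 \<or> degree g1 \<le> degree g2")
      case True
      have degA: "degree A < degree B"
      proof (cases "g1 = 0")
        case True
        have z0: "(0::'a poly) ^ (2 * CHAR('a)) = 0" by simp
        show ?thesis using True by (simp add: A_def degB z0)
      next
        case False
        then have "degree A = 2 * CHAR('a) * degree g1" using assms(2) by (simp add: A_def degree_power_eq)
        moreover have "degree g1 \<le> degree g2" using \<open>g1 = 0 \<or> degree g1 \<le> degree g2\<close> False by simp
        then have "2 * CHAR('a) * degree g1 \<le> 2 * CHAR('a) * degree g2" by simp
        ultimately show ?thesis using degB by linarith
      qed
      have n: "n = 1 + 2 * CHAR('a) * degree g2" using degA by (simp add: n_def FAB degree_add_eq_right degB)
      have "lead_coeff F = lead_coeff B" unfolding FAB by (rule lead_coeff_add_le[OF degA])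
      then have lc: "lead_coeff F = b * lead_coeff g2 ^ (2 * CHAR('a))" using lcB by simp
      have lc2: "lead_coeff g2 \<noteq> 0" using g2ne by simp
      have bc1: "(b / lead_coeff F) ^ h = 1"
      proof -
        have "b / lead_coeff F = inverse (lead_coeff g2) ^ (2 * CHAR('a))"
          using assms(3) lc2 by (simp add: lc field_simps power_inverse)
        then have "(b / lead_coeff F) ^ h = (inverse (lead_coeff g2) ^ (2 * h)) ^ CHAR('a)"
          by (simp add: power_mult[symmetric] mult_ac)
        also have "\<dots> = 1" using power_card_minus1[of "inverse (lead_coeff g2)"] lc2 h2 by simp
        finally show ?thesis .
      qed
      have "(of_int \<chi> :: 'a) ^ tri n = (-1) ^ (n + r)" using C bc1 by simp
      then have e: "\<chi> ^ tri n = (-1) ^ (n + r)" using fin by simp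
      have "2 * tri n = 2 * ((1 + 2 * CHAR('a) * degree g2) * (CHAR('a) * degree g2))"
        using tri_double[of n] n by (simp add: algebra_simps)
      then have tn: "tri n = (1 + 2 * CHAR('a) * degree g2) * (CHAR('a) * degree g2)" by simp
      have par: "even (tri n) \<longleftrightarrow> even (degree g2)" using oddp by (simp add: tn even_mult_iff)
      have e2: "\<chi> ^ tri n = \<chi> ^ degree g2" by (rule pm1_parity[OF \<chi>pm par])
      have "odd n" using n by simp
      then have "(-1::int) ^ (n + r) = - ((-1) ^ r)" by (simp add: power_add)
      then have "poly_mobius F = - (\<chi> ^ degree g2)" using mu e e2 by simp
      then show ?thesis using True g2ne unfolding F_def[symmetric] by (simp add: \<chi>_def)
    next
      case False
      then have g10: "g1 \<noteq> 0" and dlt: "degree g2 < degree g1" by auto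
      have degA: "degree A = 2 * CHAR('a) * degree g1" using assms(2) g10 by (simp add: A_def degree_power_eq)
      have "2 * CHAR('a) * (degree g2 + 1) \<le> 2 * CHAR('a) * degree g1"
        by (rule mult_le_mono2) (use dlt in simp)
      moreover have "CHAR('a) \<ge> 2" using prime_ge_2_nat[OF CHAR_prime[where ?'a='a]] .
      ultimately have dBA: "degree B < degree A" using degB degA by (simp add: algebra_simps)
      have n: "n = 2 * CHAR('a) * degree g1" using dBA by (simp add: n_def FAB degree_add_eq_left degA)
      have "lead_coeff F = lead_coeff A" unfolding FAB add.commute[of A B] by (rule lead_coeff_add_le[OF dBA])
      then have lc: "lead_coeff F = a * lead_coeff g1 ^ (2 * CHAR('a))" by (simp add: A_def lead_coeff_power)
      have lcF0: "lead_coeff F \<noteq> 0" using lc assms(2) g10 by simp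
      have bc0: "b / lead_coeff F \<noteq> 0" using lcF0 assms(3) by simp
      have bc1: "((b / lead_coeff F) ^ h) ^ n = 1"
      proof -
        have "((b / lead_coeff F) ^ h) ^ n = ((b / lead_coeff F) ^ (2 * h)) ^ (CHAR('a) * degree g1)"
          unfolding n by (simp add: power_mult[symmetric] mult_ac)
        also have "\<dots> = 1" using power_card_minus1[OF bc0] h2 by simp
        finally show ?thesis .
      qed
      have "(of_int \<chi> :: 'a) ^ tri n = (-1) ^ (n + r)" using C bc1 by simp
      then have e: "\<chi> ^ tri n = (-1) ^ (n + r)" using fin by simp
      define m where "m = CHAR('a) * degree g1"
      have m0: "m > 0" using g10 dlt by (simp add: m_def)
      have n2: "n = 2 * m" by (simp add: n m_def)
      have "2 * tri n = 2 * (m * (2 * m - 1))" using tri_double[of n] n2 by (simp add: algebra_simps)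
      then have tn: "tri n = m * (2 * m - 1)" by simp
      have "odd (2 * m - 1)" using m0 by presburger
      then have par: "even (tri n) \<longleftrightarrow> even (degree g1)" using oddp by (simp add: tn m_def even_mult_iff)
      have e2: "\<chi> ^ tri n = \<chi> ^ degree g1" by (rule pm1_parity[OF \<chi>pm par])
      have "(-1::int) ^ (n + r) = (-1) ^ r" by (simp add: n2 power_add)
      then have "poly_mobius F = \<chi> ^ degree g1" using mu e e2 by simp
      then show ?thesis using False unfolding F_def[symmetric] by (simp add: \<chi>_def)
    qed
  qed
qed

end
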